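(* Let $H=(V,E,w)$ be a hypergraph in which every vertex has positive degree and every hyperedge has rank at least $2$, and let $G$ be its clique reduction. If $f$ is an eigenvector of $D_G^{-1}J_G$ corresponding to its smallest eigenvalue $\lambda_1(D_G^{-1}J_G)$, then $$\frac{f^\top J_H f}{f^\top D_H f}\le\lambda_1(D_G^{-1}J_G),$$ and the inequality is strict if $\min_{e\in E}\mathrm{rank}(e)>2$.
   Context: A hypergraph $H=(V,E,w)$ has vertex set $V$ with $|V|=n$, hyperedges $E$ (subsets of $V$), weights $w:E\to\mathbb{R}_{>0}$; $\mathrm{rank}(e)=|e|$, $\deg(v)=\sum_{e\ni v}w(e)$, $D_H=\mathrm{diag}(\deg(v))$. For $f\in\mathbb{R}^n$, $e\in E$: $\Delta_f(e)=\max_{u\in e}f(u)+\min_{v\in e}f(v)$, $S_f(e)=\{v\in e:f(v)=\max_{u\in e}f(u)\}$, $I_f(e)=\{v\in e:f(v)=\min_{u\in e}f(u)\}$. Operator $J_H$: for $f$, let $r\in\mathbb{R}^n$ be the unique vector for which there are numbers $r_e(v)$ with $r(v)=\sum_e r_e(v)$, $r_e(v)=0$ unless $v\in S_f(e)\cup I_f(e)$, and: (1) $\sum_{v\in S_f(e)}\deg(v)r_e(v)=\sum_{v\in I_f(e)}\deg(v)r_e(v)=-w(e)\Delta_f(e)$ for all $e$; (2a) if $|r_e(u)|>0$, $u\in S_f(e)$: when $\Delta_f(e)>0$, $r(u)=\max_{v\in S_f(e)}r(v)$, when $\Delta_f(e)<0$, $r(u)=r(v)$ for all $v\in S_f(e)$;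 (2b) if $|r_e(u)|>0$, $u\in I_f(e)$: when $\Delta_f(e)<0$, $r(u)=\min_{v\in I_f(e)}r(v)$, when $\Delta_f(e)>0$, $r(u)=r(v)$ for all $v\in I_f(e)$. Then $J_H f:=-D_H r$. (One has $f^\top J_H f=\sum_e w(e)\Delta_f(e)^2$.) Clique reduction $G$: the graph on $V$ in which, for each hyperedge $e$ and each pair of distinct $u,v\in e$, weight $w(e)/(\mathrm{rank}(e)-1)$ is added to edge $\{u,v\}$; $D_G$, $A_G$ are its degree and weighted adjacency matrices and $J_G=D_G+A_G$. *)

theory Defs
  imports Main "HOL-Analysis.Analysis"
begin

text \<open>Hypergraph H = (V,E,w): V a finite vertex set, E a finite set of hyperedges (subsets of V),
  w a weight function on hyperedges. Vectors f in R^n are functions on V.\<close>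

definition hdeg :: "'a set set \<Rightarrow> ('a set \<Rightarrow> real) \<Rightarrow> 'a \<Rightarrow> real" where
  "hdeg E w v = (\<Sum>e\<in>{e\<in>E. v \<in> e}. w e)"

definition hDelta :: "('a \<Rightarrow> real) \<Rightarrow> 'a set \<Rightarrow> real" where
  "hDelta f e = Max (f ` e) + Min (f ` e)"

text \<open>f^T J_H f, via the identity f^T J_H f = sum_e w(e) Delta_f(e)^2 stated in the context.\<close>
definition hyp_JH_quad :: "'a set set \<Rightarrow> ('a set \<Rightarrow> real) \<Rightarrow> ('a \<Rightarrow> real) \<Rightarrow> real" where
  "hyp_JH_quad E w f = (\<Sum>e\<in>E. w e * (hDelta f e)\<^sup>2)"

definition hyp_DH_quad :: "'a set \<Rightarrow> 'a set set \<Rightarrow> ('a set \<Rightarrow> real) \<Rightarrow> ('a \<Rightarrow> real) \<Rightarrow> real" where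
  "hyp_DH_quad V E w f = (\<Sum>v\<in>V. hdeg E w v * (f v)\<^sup>2)"

definition clique_adj :: "'a set set \<Rightarrow> ('a set \<Rightarrow> real) \<Rightarrow> 'a \<Rightarrow> 'a \<Rightarrow> real" where
  "clique_adj E w u v =
     (if u = v then 0 else (\<Sum>e\<in>{e\<in>E. u \<in> e \<and> v \<in> e}. w e / (real (card e) - 1)))"

definition clique_deg :: "'a set \<Rightarrow> 'a set set \<Rightarrow> ('a set \<Rightarrow> real) \<Rightarrow> 'a \<Rightarrow> real" where
  "clique_deg V E w u = (\<Sum>v\<in>V. clique_adj E w u v)"

definition clique_J :: "'a set \<Rightarrow> 'a set set \<Rightarrow> ('a set \<Rightarrow> real) \<Rightarrow> ('a \<Rightarrow> real) \<Rightarrow> 'a \<Rightarrow> real" where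
  "clique_J V E w f u = clique_deg V E w u * f u + (\<Sum>v\<in>V. clique_adj E w u v * f v)"

definition clique_DinvJ :: "'a set \<Rightarrow> 'a set set \<Rightarrow> ('a set \<Rightarrow> real) \<Rightarrow> ('a \<Rightarrow> real) \<Rightarrow> 'a \<Rightarrow> real" where
  "clique_DinvJ V E w f u = clique_J V E w f u / clique_deg V E w u"

definition is_eigvec :: "'a set \<Rightarrow> (('a \<Rightarrow> real) \<Rightarrow> 'a \<Rightarrow> real) \<Rightarrow> real \<Rightarrow> ('a \<Rightarrow> real) \<Rightarrow> bool" where
  "is_eigvec V M lam f \<longleftrightarrow> (\<exists>v\<in>V. f v \<noteq> 0) \<and> (\<forall>u\<in>V. M f u = lam * f u)"

end

theory Submission
  imports Defs
begin

lemma adj_sym: "clique_adj E w u v = clique_adj E w v u"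
  unfolding clique_adj_def by (auto intro!: sum.cong)

lemma adj_nonneg:
  assumes "\<forall>e\<in>E. w e > 0" "\<forall>e\<in>E. card e \<ge> 2"
  shows "clique_adj E w u v \<ge> 0"
proof -
  have "\<forall>e\<in>{e\<in>E. u \<in> e \<and> v \<in> e}. w e / (real (card e) - 1) \<ge> 0"
  proof
    fix e assume "e \<in> {e\<in>E. u \<in> e \<and> v \<in> e}"
    then have "w e > 0" "real (card e) \<ge> 2" using assms by auto
    then show "w e / (real (card e) - 1) \<ge> 0" by simp
  qed
  then show ?thesis unfolding clique_adj_def by (auto intro: sum_nonneg)
qed

lemma adj_expand:
  assumes "finite E"
  shows "clique_adj E w u v * X = (\<Sum>e\<in>E. if u \<in> e \<and> v \<in> e \<and> u \<noteq> v then w e / (real (card e) - 1) * X else 0)"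
  unfolding clique_adj_def using assms
  by (auto simp: sum_distrib_right sum.inter_filter[symmetric] intro!: sum.cong)

lemma deg_eq:
  assumes finV: "finite V" and finE: "finite E" and edges: "\<forall>e\<in>E. e \<subseteq> V"
    and rank2: "\<forall>e\<in>E. card e \<ge> 2" and u: "u \<in> V"
  shows "clique_deg V E w u = hdeg E w u"
proof -
  have "clique_deg V E w u = (\<Sum>v\<in>V. \<Sum>e\<in>E. if u \<in> e \<and> v \<in> e \<and> u \<noteq> v then w e / (real (card e) - 1) else 0)"
  proof -
    have "\<And>v. clique_adj E w u v = (\<Sum>e\<in>E. if u \<in> e \<and> v \<in> e \<and> u \<noteq> v then w e / (real (card e) - 1) else 0)"
      unfolding clique_adj_def using finE by (auto simp: sum.inter_filter[symmetric] intro!: sum.cong)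
    then show ?thesis unfolding clique_deg_def by simp
  qed
  also have "\<dots> = (\<Sum>e\<in>E. \<Sum>v\<in>V. if u \<in> e \<and> v \<in> e \<and> u \<noteq> v then w e / (real (card e) - 1) else 0)"
    by (rule sum.swap)
  also have "\<dots> = (\<Sum>e\<in>E. if u \<in> e then w e else 0)"
  proof (rule sum.cong[OF refl])
    fix e assume e: "e \<in> E"
    show "(\<Sum>v\<in>V. if u \<in> e \<and> v \<in> e \<and> u \<noteq> v then w e / (real (card e) - 1) else 0) = (if u \<in> e then w e else 0)"
    proof (cases "u \<in> e")
      case True
      have sub: "e - {u} \<subseteq> V" using edges e by auto
      have fe: "finite e" using finV edges e finite_subset by blast
      have "(\<Sum>v\<in>V. if u \<in> e \<and> v \<in> e \<and> u \<noteq> v then w e / (real (card e) - 1) else 0)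
          = (\<Sum>v\<in>V. if v \<in> e - {u} then w e / (real (card e) - 1) else 0)"
        using True by (intro sum.cong) auto
      also have "\<dots> = (\<Sum>v\<in>e - {u}. w e / (real (card e) - 1))"
        using sum.inter_restrict[OF finV, of "\<lambda>v. w e / (real (card e) - 1)" "e - {u}"] sub
        by (simp add: Int_absorb1 inf_commute)
      also have "\<dots> = real (card e - 1) * (w e / (real (card e) - 1))"
        using True fe by simp
      also have "\<dots> = w e"
      proof -
        have c: "card e \<ge> 2" using rank2 e by auto
        then have "real (card e - 1) = real (card e) - 1" by (simp add: of_nat_diff)
        moreover have "real (card e) - 1 \<noteq> 0" using c by simp
        ultimately show ?thesis by simp
      qed
      finally show ?thesis using True by simp
    qed simp
  qed
  also have "\<dots> = hdeg E w u"
    unfolding hdeg_def using finE by (simp add: sum.inter_filter)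
  finally show ?thesis .
qed

definition edge_T :: "('a \<Rightarrow> real) \<Rightarrow> 'a set \<Rightarrow> real" where
  "edge_T f e = (\<Sum>u\<in>e. \<Sum>v\<in>e. if u = v then 0 else (f u + f v)\<^sup>2)"

lemma sum_restr:
  assumes "finite V" "e \<subseteq> V"
  shows "(\<Sum>u\<in>V. if u \<in> e then g u else 0) = (\<Sum>u\<in>e. g u)"
  using sum.inter_restrict[OF assms(1), of g e] assms(2)
  by (simp add: Int_absorb1 inf_commute)

lemma edge_T_half:
  "(\<Sum>u\<in>e. \<Sum>v\<in>e. if u = v then 0 else f u * (f u + f v)) = edge_T f e / 2"
proof -
  have sw: "(\<Sum>u\<in>e. \<Sum>v\<in>e. if u = v then 0 else f v * (f u + f v))
      = (\<Sum>u\<in>e. \<Sum>v\<in>e. if u = v then 0 else f u * (f u + f v))"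
    by (subst sum.swap) (auto intro!: sum.cong simp: algebra_simps)
  have "edge_T f e = (\<Sum>u\<in>e. \<Sum>v\<in>e. (if u = v then 0 else f u * (f u + f v)) + (if u = v then 0 else f v * (f u + f v)))"
    unfolding edge_T_def by (auto intro!: sum.cong simp: power2_eq_square algebra_simps)
  also have "\<dots> = (\<Sum>u\<in>e. \<Sum>v\<in>e. if u = v then 0 else f u * (f u + f v)) + (\<Sum>u\<in>e. \<Sum>v\<in>e. if u = v then 0 else f v * (f u + f v))"
    by (simp add: sum.distrib)
  finally show ?thesis using sw by simp
qed

lemma quad_form:
  assumes finV: "finite V" and finE: "finite E" and edges: "\<forall>e\<in>E. e \<subseteq> V"
  shows "(\<Sum>u\<in>V. f u * clique_J V E w f u) = (\<Sum>e\<in>E. w e / (real (card e) - 1) * (edge_T f e / 2))"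
proof -
  have J1: "clique_J V E w f u = (\<Sum>v\<in>V. clique_adj E w u v * (f u + f v))" for u
    unfolding clique_J_def clique_deg_def by (simp add: sum_distrib_right distrib_left sum.distrib)
  have "(\<Sum>u\<in>V. f u * clique_J V E w f u) = (\<Sum>u\<in>V. \<Sum>v\<in>V. clique_adj E w u v * (f u * (f u + f v)))"
    unfolding J1 by (simp add: sum_distrib_left algebra_simps)
  also have "\<dots> = (\<Sum>u\<in>V. \<Sum>v\<in>V. \<Sum>e\<in>E. if u \<in> e \<and> v \<in> e \<and> u \<noteq> v then w e / (real (card e) - 1) * (f u * (f u + f v)) else 0)"
    by (simp add: adj_expand[OF finE])
  also have "\<dots> = (\<Sum>u\<in>V. \<Sum>e\<in>E. \<Sum>v\<in>V. if u \<in> e \<and> v \<in> e \<and> u \<noteq> v then w e / (real (card e) - 1) * (f u * (f u + f v)) else 0)"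
    by (rule sum.cong[OF refl], rule sum.swap)
  also have "\<dots> = (\<Sum>e\<in>E. \<Sum>u\<in>V. \<Sum>v\<in>V. if u \<in> e \<and> v \<in> e \<and> u \<noteq> v then w e / (real (card e) - 1) * (f u * (f u + f v)) else 0)"
    by (rule sum.swap)
  also have "\<dots> = (\<Sum>e\<in>E. w e / (real (card e) - 1) * (edge_T f e / 2))"
  proof (rule sum.cong[OF refl])
    fix e assume e: "e \<in> E"
    have sub: "e \<subseteq> V" using edges e by auto
    have "(\<Sum>u\<in>V. \<Sum>v\<in>V. if u \<in> e \<and> v \<in> e \<and> u \<noteq> v then w e / (real (card e) - 1) * (f u * (f u + f v)) else 0)
       = (\<Sum>u\<in>V. if u \<in> e then (\<Sum>v\<in>V. if v \<in> e then (if u = v then 0 else w e / (real (card e) - 1) * (f u * (f u + f v))) else 0) else 0)"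
      by (auto intro!: sum.cong)
    also have "\<dots> = (\<Sum>u\<in>e. \<Sum>v\<in>e. if u = v then 0 else w e / (real (card e) - 1) * (f u * (f u + f v)))"
      by (simp add: sum_restr[OF finV sub])
    also have "\<dots> = w e / (real (card e) - 1) * (\<Sum>u\<in>e. \<Sum>v\<in>e. if u = v then 0 else f u * (f u + f v))"
      by (simp add: sum_distrib_left if_distrib cong: if_cong)
    also have "\<dots> = w e / (real (card e) - 1) * (edge_T f e / 2)"
      by (simp add: edge_T_half)
    finally show "(\<Sum>u\<in>V. \<Sum>v\<in>V. if u \<in> e \<and> v \<in> e \<and> u \<noteq> v then w e / (real (card e) - 1) * (f u * (f u + f v)) else 0) = w e / (real (card e) - 1) * (edge_T f e / 2)" .
  qed
  finally show ?thesis .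
qed

lemma pt_ineq: fixes m x M :: real assumes "m \<le> x" "x \<le> M" shows "(M+m)^2 \<le> (M+x)^2 + (m+x)^2"
proof (cases "M + m \<ge> 0")
  case True
  then have "(M+m)^2 \<le> (M+x)^2" using assms by (intro power_mono) auto
  then show ?thesis by (simp add: add_increasing2)
next
  case False
  then have "(-(M+m))^2 \<le> (-(m+x))^2" using assms by (intro power_mono) auto
  then have "(M+m)^2 \<le> (m+x)^2" by (simp only: power2_minus)
  moreover have "0 \<le> (M+x)^2" by simp
  ultimately show ?thesis by linarith
qed

lemma pt_eq: fixes m x M :: real assumes "m \<le> x" "x \<le> M" "(M+x)^2 + (m+x)^2 = (M+m)^2"
  shows "x = 0 \<and> M*m = 0"
proof (cases "M + m \<ge> 0")
  case True
  then have "(M+m)^2 \<le> (M+x)^2" using assms by (intro power_mono) auto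
  moreover have "0 \<le> (m+x)^2" by simp
  ultimately have "(m+x)^2 = 0" using assms(3) by linarith
  then have x: "x = -m" by simp
  have "(M+m)^2 - (M-m)^2 = 4*(M*m)" by (simp add: power2_eq_square algebra_simps)
  moreover have "(M-m)^2 = (M+m)^2" using assms(3) x by simp
  ultimately have Mm: "M*m = 0" by linarith
  then have "M = 0 \<or> m = 0" by simp
  then show ?thesis using x True assms(1,2) Mm by linarith
next
  case False
  then have "(-(M+m))^2 \<le> (-(m+x))^2" using assms by (intro power_mono) auto
  then have "(M+m)^2 \<le> (m+x)^2" by (simp only: power2_minus)
  moreover have "0 \<le> (M+x)^2" by simp
  ultimately have "(M+x)^2 = 0" using assms(3) by linarith
  then have x: "x = -M" by simp
  have "(M+m)^2 - (m-M)^2 = 4*(M*m)" by (simp add: power2_eq_square algebra_simps)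
  moreover have "(m-M)^2 = (M+m)^2" using assms(3) x by simp
  ultimately have Mm: "M*m = 0" by linarith
  then have "M = 0 \<or> m = 0" by simp
  then show ?thesis using x False assms(1,2) Mm by linarith
qed

lemma sum_ab:
  assumes "finite e" "a \<in> e" "b \<in> e" "a \<noteq> b"
  shows "sum g e = g a + g b + sum g (e - {a,b})"
proof -
  have "sum g e = g a + sum g (e - {a})" by (rule sum.remove[OF assms(1,2)])
  also have "sum g (e - {a}) = g b + sum g (e - {a} - {b})" using assms by (intro sum.remove) auto
  also have "e - {a} - {b} = e - {a,b}" by auto
  finally show ?thesis by (simp add: add.assoc)
qed

lemma edge_core:
  fixes f :: "'a \<Rightarrow> real"
  assumes fin: "finite e" and ab: "a \<in> e" "b \<in> e" "a \<noteq> b"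
    and bnd: "\<forall>x\<in>e. f b \<le> f x \<and> f x \<le> f a"
  shows "2 * (real (card e) - 1) * (f a + f b)\<^sup>2 \<le> edge_T f e \<and>
    (card e \<ge> 3 \<longrightarrow> 2 * (real (card e) - 1) * (f a + f b)\<^sup>2 = edge_T f e \<longrightarrow>
       (\<forall>u\<in>e. \<forall>v\<in>e. u \<noteq> v \<longrightarrow> f u * f v = 0))"
proof -
  define R where "R = e - {a,b}"
  define row where "row u = (\<Sum>v\<in>e. if u = v then 0 else (f u + f v)\<^sup>2)" for u
  define h where "h v = (f a + f v)\<^sup>2 + (f b + f v)\<^sup>2" for v
  define s where "s = f a + f b"
  have finR: "finite R" using fin R_def by simp
  have sub: "{a,b} \<subseteq> e" using ab by auto
  have cardR0: "card R = card e - 2" unfolding R_def using card_Diff_subset[OF _ sub] ab by simp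
  have ce: "card e \<ge> 2" using card_mono[OF fin sub] ab by simp
  have cardR: "real (card R) = real (card e) - 2" using cardR0 ce by (simp add: of_nat_diff)
  have ET: "edge_T f e = row a + row b + sum row R"
  proof -
    have "edge_T f e = sum row e" by (simp add: edge_T_def row_def)
    then show ?thesis using sum_ab[OF fin ab, of row] unfolding R_def by simp
  qed
  have ra: "row a = s\<^sup>2 + (\<Sum>v\<in>R. (f a + f v)\<^sup>2)"
  proof -
    have "row a = 0 + (f a + f b)\<^sup>2 + (\<Sum>v\<in>R. if a = v then 0 else (f a + f v)\<^sup>2)"
      unfolding row_def R_def using sum_ab[OF fin ab, of "\<lambda>v. if a = v then 0 else (f a + f v)\<^sup>2"] ab by simp
    also have "(\<Sum>v\<in>R. if a = v then 0 else (f a + f v)\<^sup>2) = (\<Sum>v\<in>R. (f a + f v)\<^sup>2)"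
      unfolding R_def by (intro sum.cong) auto
    finally show ?thesis unfolding s_def by simp
  qed
  have rb: "row b = s\<^sup>2 + (\<Sum>v\<in>R. (f b + f v)\<^sup>2)"
  proof -
    have "row b = (f b + f a)\<^sup>2 + 0 + (\<Sum>v\<in>R. if b = v then 0 else (f b + f v)\<^sup>2)"
      unfolding row_def R_def using sum_ab[OF fin ab, of "\<lambda>v. if b = v then 0 else (f b + f v)\<^sup>2"] ab by simp
    also have "(\<Sum>v\<in>R. if b = v then 0 else (f b + f v)\<^sup>2) = (\<Sum>v\<in>R. (f b + f v)\<^sup>2)"
      unfolding R_def by (intro sum.cong) auto
    finally show ?thesis unfolding s_def by (simp add: add.commute)
  qed
  have rv: "h v \<le> row v" if v: "v \<in> R" for v
  proof -
    have va: "v \<noteq> a" "v \<noteq> b" using v R_def by auto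
    have "row v = (f v + f a)\<^sup>2 + (f v + f b)\<^sup>2 + (\<Sum>x\<in>R. if v = x then 0 else (f v + f x)\<^sup>2)"
      unfolding row_def using sum_ab[OF fin ab, of "\<lambda>x. if v = x then 0 else (f v + f x)\<^sup>2"] va unfolding R_def by simp
    moreover have "(\<Sum>x\<in>R. if v = x then 0 else (f v + f x)\<^sup>2) \<ge> 0" by (intro sum_nonneg) auto
    ultimately show ?thesis unfolding h_def by (simp add: add.commute)
  qed
  have hs: "s\<^sup>2 \<le> h v" if v: "v \<in> R" for v
  proof -
    have "v \<in> e" using v R_def by auto
    then have "f b \<le> f v" "f v \<le> f a" using bnd by auto
    then show ?thesis unfolding s_def h_def using pt_ineq[of "f b" "f v" "f a"] by simp
  qed
  have sumh: "(\<Sum>v\<in>R. h v) = (\<Sum>v\<in>R. (f a + f v)\<^sup>2) + (\<Sum>v\<in>R. (f b + f v)\<^sup>2)"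
    unfolding h_def by (simp add: sum.distrib)
  have rowR: "(\<Sum>v\<in>R. h v) \<le> sum row R" using rv by (intro sum_mono) auto
  have ETge: "edge_T f e \<ge> 2 * s\<^sup>2 + 2 * (\<Sum>v\<in>R. h v)"
    using ET ra rb sumh rowR by linarith
  have hR: "(\<Sum>v\<in>R. h v - s\<^sup>2) = (\<Sum>v\<in>R. h v) - real (card R) * s\<^sup>2"
    by (simp add: sum_subtractf)
  have hR0: "(\<Sum>v\<in>R. h v - s\<^sup>2) \<ge> 0" using hs by (intro sum_nonneg) auto
  have lhs: "2 * (real (card e) - 1) * s\<^sup>2 = 2 * s\<^sup>2 + 2 * (real (card R) * s\<^sup>2)"
    by (simp add: cardR algebra_simps)
  have part1: "2 * (real (card e) - 1) * s\<^sup>2 \<le> edge_T f e"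
    using ETge hR hR0 lhs by linarith
  have part2: "\<forall>u\<in>e. \<forall>v\<in>e. u \<noteq> v \<longrightarrow> f u * f v = 0"
    if c3: "card e \<ge> 3" and eq: "2 * (real (card e) - 1) * s\<^sup>2 = edge_T f e"
  proof -
    have "(\<Sum>v\<in>R. h v - s\<^sup>2) = 0" using ETge hR hR0 lhs eq by linarith
    moreover have nn: "\<forall>v\<in>R. h v - s\<^sup>2 \<ge> 0" using hs by simp
    ultimately have hz: "\<forall>v\<in>R. h v - s\<^sup>2 = 0"
      using sum_nonneg_eq_0_iff[OF finR, of "\<lambda>v. h v - s\<^sup>2"] by (simp only: nn)
    have zR: "f v = 0 \<and> f a * f b = 0" if v: "v \<in> R" for v
    proof -
      have "(f a + f v)\<^sup>2 + (f b + f v)\<^sup>2 = (f a + f b)\<^sup>2" using hz v unfolding h_def s_def by auto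
      moreover have "v \<in> e" using v R_def by auto
      then have "f b \<le> f v" "f v \<le> f a" using bnd by auto
      ultimately show ?thesis using pt_eq[of "f b" "f v" "f a"] by simp
    qed
    have "card R \<ge> 1" using cardR0 c3 by simp
    then have "R \<noteq> {}" by auto
    then obtain v0 where "v0 \<in> R" by blast
    then have ab0: "f a * f b = 0" using zR by blast
    show ?thesis
    proof (intro ballI impI)
      fix u v assume u: "u \<in> e" and v: "v \<in> e" and uv: "u \<noteq> v"
      show "f u * f v = 0"
      proof (cases "u \<in> R \<or> v \<in> R")
        case True then show ?thesis using zR by auto
      next
        case False
        then have "(u = a \<and> v = b) \<or> (u = b \<and> v = a)" using u v uv R_def by auto
        then show ?thesis using ab0 by (auto simp: mult.commute)
      qed
    qed
  qed
  have p1: "2 * (real (card e) - 1) * (f a + f b)\<^sup>2 \<le> edge_T f e" using part1 unfolding s_def .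
  show ?thesis
  proof (intro conjI impI)
    show "2 * (real (card e) - 1) * (f a + f b)\<^sup>2 \<le> edge_T f e" by (rule p1)
  next
    assume c3: "card e \<ge> 3" and eq: "2 * (real (card e) - 1) * (f a + f b)\<^sup>2 = edge_T f e"
    show "\<forall>u\<in>e. \<forall>v\<in>e. u \<noteq> v \<longrightarrow> f u * f v = 0"
      using part2[OF c3] eq unfolding s_def by blast
  qed
qed

lemma edge_bound:
  fixes f :: "'a \<Rightarrow> real"
  assumes fin: "finite e" and c2: "card e \<ge> 2"
  shows "2 * (real (card e) - 1) * (hDelta f e)\<^sup>2 \<le> edge_T f e \<and>
    (card e \<ge> 3 \<longrightarrow> 2 * (real (card e) - 1) * (hDelta f e)\<^sup>2 = edge_T f e \<longrightarrow>
       (\<forall>u\<in>e. \<forall>v\<in>e. u \<noteq> v \<longrightarrow> f u * f v = 0))"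
proof -
  have ne: "e \<noteq> {}" using c2 by auto
  have fi: "finite (f ` e)" "f ` e \<noteq> {}" using fin ne by auto
  obtain a where a: "a \<in> e" "f a = Max (f ` e)" using Max_in[OF fi] by (metis imageE)
  obtain b0 where b0: "b0 \<in> e" "f b0 = Min (f ` e)" using Min_in[OF fi] by (metis imageE)
  have bnds: "\<forall>x\<in>e. Min (f ` e) \<le> f x \<and> f x \<le> Max (f ` e)" using fi(1) by auto
  obtain b where b: "b \<in> e" "b \<noteq> a" "f b = Min (f ` e)"
  proof (cases "b0 = a")
    case False then show ?thesis using that b0 by blast
  next
    case True
    have "e - {a} \<noteq> {}"
    proof
      assume "e - {a} = {}"
      then have "e \<subseteq> {a}" by auto
      then have "card e \<le> card {a}" by (intro card_mono) auto
      then show False using c2 by simp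
    qed
    then obtain b where bb: "b \<in> e" "b \<noteq> a" by blast
    then have "f b = Min (f ` e)" using bnds True a b0 by (metis order_antisym)
    then show ?thesis using that bb by blast
  qed
  have hd: "hDelta f e = f a + f b" unfolding hDelta_def using a b by simp
  have bnd: "\<forall>x\<in>e. f b \<le> f x \<and> f x \<le> f a" using bnds a b by simp
  show ?thesis using edge_core[OF fin a(1) b(1) b(2)[symmetric] bnd] unfolding hd .
qed

lemma cont_coord [continuous_intros]: "continuous_on S (\<lambda>g::'a \<Rightarrow> real. g x)"
  by (rule continuous_on_subset[OF continuous_on_product_coordinates]) simp

lemma J_lin: "clique_J V E w (\<lambda>x. g x + t * d x) u = clique_J V E w g u + t * clique_J V E w d u"
  unfolding clique_J_def by (simp add: algebra_simps sum.distrib sum_distrib_left)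

lemma J_scale: "clique_J V E w (\<lambda>x. c * g x) u = c * clique_J V E w g u"
  unfolding clique_J_def by (simp add: algebra_simps sum_distrib_left)

lemma J_cong: "\<forall>v\<in>V. g v = g' v \<Longrightarrow> u \<in> V \<Longrightarrow> clique_J V E w g u = clique_J V E w g' u"
  unfolding clique_J_def by simp

lemma J_sym:
  shows "(\<Sum>u\<in>V. g u * clique_J V E w d u) = (\<Sum>u\<in>V. d u * clique_J V E w g u)"
proof -
  have "(\<Sum>u\<in>V. g u * clique_J V E w d u) = (\<Sum>u\<in>V. clique_deg V E w u * g u * d u) + (\<Sum>u\<in>V. \<Sum>v\<in>V. clique_adj E w u v * g u * d v)"
    unfolding clique_J_def by (simp add: algebra_simps sum.distrib sum_distrib_left)
  also have "(\<Sum>u\<in>V. \<Sum>v\<in>V. clique_adj E w u v * g u * d v) = (\<Sum>u\<in>V. \<Sum>v\<in>V. clique_adj E w u v * d u * g v)"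
    by (subst sum.swap) (simp add: adj_sym mult.commute mult.left_commute)
  also have "(\<Sum>u\<in>V. clique_deg V E w u * g u * d u) + (\<Sum>u\<in>V. \<Sum>v\<in>V. clique_adj E w u v * d u * g v)
     = (\<Sum>u\<in>V. d u * clique_J V E w g u)"
    unfolding clique_J_def by (simp add: algebra_simps sum.distrib sum_distrib_left)
  finally show ?thesis .
qed

lemma lin_zero:
  fixes a b :: real
  assumes "\<forall>t. a * t\<^sup>2 + b * t \<ge> 0"
  shows "b = 0"
proof (rule ccontr)
  assume b: "b \<noteq> 0"
  define c where "c = \<bar>a\<bar> + 1"
  have p: "c > 0" "a - c < 0" unfolding c_def by auto
  define t where "t = - b / c"
  have "a * t\<^sup>2 + b * t = b\<^sup>2 * (a - c) / c\<^sup>2"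
    unfolding t_def using p by (simp add: field_simps power2_eq_square)
  moreover have "b\<^sup>2 * (a - c) < 0" using b p by (simp add: mult_pos_neg)
  ultimately have "a * t\<^sup>2 + b * t < 0" using p by (simp add: divide_neg_pos)
  then show False using assms by (meson not_le)
qed

lemma exists_small_eig:
  fixes V :: "'a set" and E :: "'a set set" and w :: "'a set \<Rightarrow> real"
  assumes finV: "finite V" and finE: "finite E"
    and edges: "\<forall>e\<in>E. e \<subseteq> V"
    and wpos: "\<forall>e\<in>E. w e > 0"
    and rank2: "\<forall>e\<in>E. card e \<ge> 2"
    and Dpos: "\<forall>v\<in>V. clique_deg V E w v > 0"
    and e0: "e0 \<in> E"
  shows "\<exists>mu g. is_eigvec V (clique_DinvJ V E w) mu g \<and> mu < 1"
proof -
  define D where "D = clique_deg V E w"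
  define J where "J = clique_J V E w"
  define B where "B g = (\<Sum>u\<in>V. g u * J g u)" for g
  define N where "N g = (\<Sum>u\<in>V. D u * (g u)\<^sup>2)" for g
  define K :: "('a \<Rightarrow> real) set" where "K = PiE UNIV (\<lambda>v. if v \<in> V then {-1..1} else {0})"
  define S where "S = K \<inter> {g. (\<Sum>v\<in>V. (g v)\<^sup>2) = 1}"
  have compK: "compact K"
  proof -
    have "compactin (product_topology (\<lambda>i. euclidean) UNIV) K"
      unfolding K_def compactin_PiE by auto
    then show ?thesis by (simp add: euclidean_product_topology)
  qed
  have closedS: "closed {g::'a\<Rightarrow>real. (\<Sum>v\<in>V. (g v)\<^sup>2) = 1}"
    by (intro closed_Collect_eq continuous_intros)
  have compS: "compact S" unfolding S_def using compK closedS by (rule compact_Int_closed)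
  have Vne: "V \<noteq> {}" using edges e0 rank2 by fastforce
  then obtain v0 where v0: "v0 \<in> V" by blast
  define g1 :: "'a \<Rightarrow> real" where "g1 x = (if x = v0 then 1 else 0)" for x
  have g1S: "g1 \<in> S"
  proof -
    have "g1 \<in> K" unfolding K_def g1_def using v0 by auto
    moreover have "(\<Sum>v\<in>V. (g1 v)\<^sup>2) = (\<Sum>v\<in>V. if v = v0 then 1 else 0)"
      by (intro sum.cong) (auto simp: g1_def)
    then have "(\<Sum>v\<in>V. (g1 v)\<^sup>2) = 1" using v0 finV by simp
    ultimately show ?thesis unfolding S_def by simp
  qed
  have Npos: "N g > 0" if ex: "\<exists>v\<in>V. g v \<noteq> 0" for g
  proof -
    obtain v where v: "v \<in> V" "g v \<noteq> 0" using ex by blast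
    have "D v * (g v)\<^sup>2 > 0" using v Dpos D_def by simp
    moreover have "\<forall>u\<in>V. D u * (g u)\<^sup>2 \<ge> 0" using Dpos D_def by (simp add: less_imp_le)
    ultimately show ?thesis unfolding N_def by (intro sum_pos2[OF finV v(1)]) auto
  qed
  have Snz: "\<exists>v\<in>V. g v \<noteq> 0" if gS: "g \<in> S" for g
  proof (rule ccontr)
    assume "\<not> (\<exists>v\<in>V. g v \<noteq> 0)"
    then have "(\<Sum>v\<in>V. (g v)\<^sup>2) = 0" by simp
    then show False using gS S_def by simp
  qed
  have contB: "continuous_on S (\<lambda>g. B g / N g)"
  proof (rule continuous_on_divide)
    show "continuous_on S B" unfolding B_def J_def clique_J_def by (intro continuous_intros)
    show "continuous_on S N" unfolding N_def by (intro continuous_intros)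
    show "\<forall>g\<in>S. N g \<noteq> 0" using Npos Snz by (metis less_irrefl)
  qed
  obtain g0 where g0: "g0 \<in> S" and g0min: "\<forall>g\<in>S. B g0 / N g0 \<le> B g / N g"
    using continuous_attains_inf[OF compS _ contB] g1S by blast
  define mu where "mu = B g0 / N g0"
  have Ng0: "N g0 > 0" using Npos Snz g0 by blast
  have Bg0: "B g0 = mu * N g0" unfolding mu_def using Ng0 by simp
  have allh: "mu * N h \<le> B h" for h
  proof (cases "\<exists>v\<in>V. h v \<noteq> 0")
    case False
    then show ?thesis unfolding N_def B_def by simp
  next
    case True
    define r where "r = sqrt (\<Sum>v\<in>V. (h v)\<^sup>2)"
    have Q: "(\<Sum>v\<in>V. (h v)\<^sup>2) > 0"
    proof -
      obtain v where v: "v \<in> V" "h v \<noteq> 0" using True by blast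
      show ?thesis by (rule sum_pos2[OF finV v(1)]) (use v in auto)
    qed
    then have rpos: "r > 0" unfolding r_def by simp
    have r2: "r\<^sup>2 = (\<Sum>v\<in>V. (h v)\<^sup>2)" unfolding r_def using Q by simp
    define h' where "h' x = (if x \<in> V then h x / r else 0)" for x
    have h'K: "h' \<in> K"
    proof -
      have hb: "- 1 \<le> h x / r \<and> h x / r \<le> 1" if x: "x \<in> V" for x
      proof -
        have "(h x)\<^sup>2 \<le> (\<Sum>v\<in>V. (h v)\<^sup>2)" using member_le_sum[OF x _ finV, of "\<lambda>v. (h v)\<^sup>2"] by simp
        then have "sqrt ((h x)\<^sup>2) \<le> r" unfolding r_def by (rule real_sqrt_le_mono)
        then have "\<bar>h x\<bar> \<le> r" by simp
        moreover have "\<bar>h x / r\<bar> = \<bar>h x\<bar> / r" using rpos by (simp add: abs_divide)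
        ultimately have "\<bar>h x / r\<bar> \<le> 1" using rpos by (simp add: pos_divide_le_eq)
        then show ?thesis by linarith
      qed
      show ?thesis unfolding K_def h'_def using hb by auto
    qed
    have "(\<Sum>v\<in>V. (h' v)\<^sup>2) = (\<Sum>v\<in>V. (h v)\<^sup>2 / r\<^sup>2)"
      by (intro sum.cong refl) (simp add: h'_def power_divide)
    also have "\<dots> = (\<Sum>v\<in>V. (h v)\<^sup>2) / r\<^sup>2" by (simp add: sum_divide_distrib)
    finally have "(\<Sum>v\<in>V. (h' v)\<^sup>2) = (\<Sum>v\<in>V. (h v)\<^sup>2) / r\<^sup>2" .
    then have "(\<Sum>v\<in>V. (h' v)\<^sup>2) = 1" using r2 Q by simp
    then have h'S: "h' \<in> S" unfolding S_def using h'K by simp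
    have Jh': "J h' u = J h u / r" if "u \<in> V" for u
    proof -
      have "J h' u = J (\<lambda>x. (1/r) * h x) u" unfolding J_def
        by (rule J_cong) (auto simp: h'_def that)
      also have "\<dots> = J h u / r" unfolding J_def J_scale by simp
      finally show ?thesis .
    qed
    have "B h' = (\<Sum>u\<in>V. h u * J h u / r\<^sup>2)" unfolding B_def
      by (intro sum.cong refl) (simp add: h'_def Jh' power2_eq_square)
    also have "\<dots> = B h / r\<^sup>2" unfolding B_def by (simp add: sum_divide_distrib)
    finally have Bh': "B h' = B h / r\<^sup>2" .
    have "N h' = (\<Sum>u\<in>V. D u * (h u)\<^sup>2 / r\<^sup>2)" unfolding N_def
      by (intro sum.cong refl) (simp add: h'_def power_divide)
    also have "\<dots> = N h / r\<^sup>2" unfolding N_def by (simp add: sum_divide_distrib)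
    finally have Nh': "N h' = N h / r\<^sup>2" .
    have "mu \<le> B h' / N h'" using g0min h'S unfolding mu_def by blast
    also have "\<dots> = B h / N h" using Bh' Nh' rpos by simp
    finally show ?thesis using Npos[OF True] by (simp add: pos_le_divide_eq)
  qed
  have eigeq: "J g0 u = mu * (D u * g0 u)" if u: "u \<in> V" for u
  proof -
    define d :: "'a \<Rightarrow> real" where "d x = (if x = u then 1 else 0)" for x
    have Bexp: "B (\<lambda>x. g0 x + t * d x) = B g0 + 2 * t * (\<Sum>x\<in>V. d x * J g0 x) + t\<^sup>2 * B d" for t
    proof -
      have "B (\<lambda>x. g0 x + t * d x) = (\<Sum>x\<in>V. (g0 x + t * d x) * (J g0 x + t * J d x))"
        unfolding B_def J_def J_lin by simp
      also have "\<dots> = B g0 + t * (\<Sum>x\<in>V. g0 x * J d x) + t * (\<Sum>x\<in>V. d x * J g0 x) + t\<^sup>2 * B d"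
        unfolding B_def by (simp add: algebra_simps sum.distrib sum_distrib_left power2_eq_square)
      also have "(\<Sum>x\<in>V. g0 x * J d x) = (\<Sum>x\<in>V. d x * J g0 x)" unfolding J_def by (rule J_sym)
      finally show ?thesis by simp
    qed
    have Nexp: "N (\<lambda>x. g0 x + t * d x) = N g0 + 2 * t * (\<Sum>x\<in>V. D x * d x * g0 x) + t\<^sup>2 * N d" for t
      unfolding N_def by (simp add: algebra_simps sum.distrib sum_distrib_left power2_eq_square)
    have "(\<Sum>x\<in>V. d x * J g0 x) = (\<Sum>x\<in>V. if x = u then J g0 u else 0)"
      by (intro sum.cong refl) (simp add: d_def)
    then have s1: "(\<Sum>x\<in>V. d x * J g0 x) = J g0 u" using u finV by simp
    have "(\<Sum>x\<in>V. D x * d x * g0 x) = (\<Sum>x\<in>V. if x = u then D u * g0 u else 0)"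
      by (intro sum.cong refl) (simp add: d_def)
    then have s2: "(\<Sum>x\<in>V. D x * d x * g0 x) = D u * g0 u" using u finV by simp
    have "\<forall>t. (B d - mu * N d) * t\<^sup>2 + (2 * (J g0 u - mu * (D u * g0 u))) * t \<ge> 0"
    proof
      fix t
      have "mu * N (\<lambda>x. g0 x + t * d x) \<le> B (\<lambda>x. g0 x + t * d x)" by (rule allh)
      then show "(B d - mu * N d) * t\<^sup>2 + (2 * (J g0 u - mu * (D u * g0 u))) * t \<ge> 0"
        unfolding Bexp Nexp s1 s2 Bg0 by (simp add: algebra_simps)
    qed
    then have "2 * (J g0 u - mu * (D u * g0 u)) = 0" by (rule lin_zero)
    then show ?thesis by simp
  qed
  have eig: "is_eigvec V (clique_DinvJ V E w) mu g0"
    unfolding is_eigvec_def clique_DinvJ_def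
  proof (intro conjI ballI)
    show "\<exists>v\<in>V. g0 v \<noteq> 0" using Snz g0 by blast
  next
    fix u assume u: "u \<in> V"
    have "D u > 0" using Dpos u D_def by simp
    then show "clique_J V E w g0 u / clique_deg V E w u = mu * g0 u"
      using eigeq[OF u] unfolding J_def D_def by simp
  qed
  obtain a b where ab: "a \<in> e0" "b \<in> e0" "a \<noteq> b"
  proof -
    have "card e0 \<ge> 2" using rank2 e0 by auto
    then obtain a where a: "a \<in> e0" by fastforce
    have "e0 - {a} \<noteq> {}"
    proof
      assume "e0 - {a} = {}"
      then have "e0 \<subseteq> {a}" by auto
      then have "card e0 \<le> card {a}" by (intro card_mono) auto
      then show False using \<open>card e0 \<ge> 2\<close> by simp
    qed
    then obtain b where "b \<in> e0" "b \<noteq> a" by blast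
    then show ?thesis using that a by blast
  qed
  have aV: "a \<in> V" and bV: "b \<in> V" using ab edges e0 by auto
  have Aab: "clique_adj E w a b > 0"
  proof -
    have fin: "finite {e\<in>E. a \<in> e \<and> b \<in> e}" using finE by simp
    have mem: "e0 \<in> {e\<in>E. a \<in> e \<and> b \<in> e}" using e0 ab by simp
    have pos: "w e / (real (card e) - 1) > 0" if "e \<in> E" for e
    proof -
      have "w e > 0" "real (card e) \<ge> 2" using wpos rank2 that by auto
      then show ?thesis by simp
    qed
    have "(\<Sum>e\<in>{e\<in>E. a \<in> e \<and> b \<in> e}. w e / (real (card e) - 1)) > 0"
      using sum_pos2[OF fin mem, of "\<lambda>e. w e / (real (card e) - 1)"] pos e0 by (auto simp: less_imp_le)
    then show ?thesis unfolding clique_adj_def using ab by simp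
  qed
  define h :: "'a \<Rightarrow> real" where "h x = (if x = a then 1 else 0) - (if x = b then 1 else 0)" for x
  have Jh: "J h x = D x * h x + clique_adj E w x a - clique_adj E w x b" for x
  proof -
    have "(\<Sum>v\<in>V. clique_adj E w x v * h v) = (\<Sum>v\<in>V. (if v = a then clique_adj E w x a else 0) - (if v = b then clique_adj E w x b else 0))"
      unfolding h_def by (intro sum.cong) auto
    also have "\<dots> = clique_adj E w x a - clique_adj E w x b"
      using aV bV finV by (simp add: sum_subtractf)
    finally show ?thesis unfolding J_def clique_J_def D_def by simp
  qed
  have Bh: "B h = D a + D b - 2 * clique_adj E w a b"
  proof -
    have "B h = (\<Sum>u\<in>V. (if u = a then J h a else 0) - (if u = b then J h b else 0))"
      unfolding B_def h_def by (intro sum.cong) auto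
    also have "\<dots> = J h a - J h b" using aV bV finV by (simp add: sum_subtractf)
    also have "\<dots> = D a + D b - 2 * clique_adj E w a b"
    proof -
      have Aaa: "clique_adj E w x x = 0" for x by (simp add: clique_adj_def)
      show ?thesis unfolding Jh using ab by (simp add: h_def adj_sym[of E w b a] Aaa)
    qed
    finally show ?thesis .
  qed
  have Nh: "N h = D a + D b"
  proof -
    have "N h = (\<Sum>u\<in>V. (if u = a then D a else 0) + (if u = b then D b else 0))"
      unfolding N_def h_def using ab by (intro sum.cong) auto
    also have "\<dots> = D a + D b" using aV bV finV by (simp add: sum.distrib)
    finally show ?thesis .
  qed
  have "mu * N h \<le> B h" by (rule allh)
  then have "mu * (D a + D b) < D a + D b" using Bh Nh Aab by simp
  moreover have "D a + D b > 0" using Dpos aV bV D_def by (simp add: add_pos_pos)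
  ultimately have "mu < 1" by simp
  then show ?thesis using eig by blast
qed

theorem lemma8:
  fixes V :: "'a set" and E :: "'a set set" and w :: "'a set \<Rightarrow> real"
    and f :: "'a \<Rightarrow> real" and lam1 :: real
  assumes finV: "finite V" and finE: "finite E"
    and edges: "\<forall>e\<in>E. e \<subseteq> V"
    and wpos: "\<forall>e\<in>E. w e > 0"
    and rank2: "\<forall>e\<in>E. card e \<ge> 2"
    and degpos: "\<forall>v\<in>V. hdeg E w v > 0"
    and eig: "is_eigvec V (clique_DinvJ V E w) lam1 f"
    and smallest: "\<forall>mu g. is_eigvec V (clique_DinvJ V E w) mu g \<longrightarrow> lam1 \<le> mu"
  shows "hyp_JH_quad E w f / hyp_DH_quad V E w f \<le> lam1
       \<and> ((\<forall>e\<in>E. card e > 2) \<longrightarrow> hyp_JH_quad E w f / hyp_DH_quad V E w f < lam1)"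
proof -
  have fE: "finite e" if "e \<in> E" for e using that edges finV finite_subset by blast
  obtain v0 where v0: "v0 \<in> V" "f v0 \<noteq> 0" using eig unfolding is_eigvec_def by blast
  have Deq: "clique_deg V E w u = hdeg E w u" if "u \<in> V" for u
    using deg_eq[OF finV finE edges rank2 that] .
  have Dpos: "\<forall>v\<in>V. clique_deg V E w v > 0" using Deq degpos by simp
  have eigJ: "clique_J V E w f u = lam1 * (hdeg E w u * f u)" if u: "u \<in> V" for u
  proof -
    have "clique_J V E w f u / clique_deg V E w u = lam1 * f u"
      using eig u unfolding is_eigvec_def clique_DinvJ_def by blast
    moreover have "clique_deg V E w u > 0" using Dpos u by blast
    ultimately show ?thesis using Deq[OF u] by (simp add: field_simps)
  qed
  define DH where "DH = hyp_DH_quad V E w f"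
  define JH where "JH = hyp_JH_quad E w f"
  define c where "c e = w e / (real (card e) - 1)" for e
  have S1: "(\<Sum>u\<in>V. f u * clique_J V E w f u) = lam1 * DH"
  proof -
    have "(\<Sum>u\<in>V. f u * clique_J V E w f u) = (\<Sum>u\<in>V. lam1 * (hdeg E w u * (f u)\<^sup>2))"
      by (intro sum.cong refl) (simp add: eigJ power2_eq_square algebra_simps)
    then show ?thesis unfolding DH_def hyp_DH_quad_def by (simp add: sum_distrib_left)
  qed
  have DHpos: "DH > 0"
  proof -
    have "hdeg E w v0 * (f v0)\<^sup>2 > 0" using degpos v0 by simp
    moreover have "\<forall>u\<in>V. hdeg E w u * (f u)\<^sup>2 \<ge> 0" using degpos by (simp add: less_imp_le)
    ultimately show ?thesis unfolding DH_def hyp_DH_quad_def by (intro sum_pos2[OF finV v0(1)]) auto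
  qed
  have QF: "(\<Sum>u\<in>V. f u * clique_J V E w f u) = (\<Sum>e\<in>E. c e * (edge_T f e / 2))"
    unfolding c_def by (rule quad_form[OF finV finE edges])
  define gap where "gap e = c e * (edge_T f e / 2) - w e * (hDelta f e)\<^sup>2" for e
  have gapform: "gap e = w e / (2 * (real (card e) - 1)) * (edge_T f e - 2 * (real (card e) - 1) * (hDelta f e)\<^sup>2)"
    if e: "e \<in> E" for e
  proof -
    have "real (card e) - 1 > 0" using rank2 e by auto
    then show ?thesis unfolding gap_def c_def by (simp add: field_simps)
  qed
  have gap0: "gap e \<ge> 0" if e: "e \<in> E" for e
  proof -
    have "real (card e) - 1 > 0" using rank2 e by auto
    moreover have "w e > 0" using wpos e by auto
    moreover have "edge_T f e - 2 * (real (card e) - 1) * (hDelta f e)\<^sup>2 \<ge> 0"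
      using edge_bound[OF fE[OF e], of f] rank2 e by auto
    ultimately show ?thesis unfolding gapform[OF e] by simp
  qed
  have sumgap: "(\<Sum>e\<in>E. gap e) = lam1 * DH - JH"
    unfolding gap_def JH_def hyp_JH_quad_def using S1 QF by (simp add: sum_subtractf)
  have le: "JH \<le> lam1 * DH" using sumgap sum_nonneg[of E gap] gap0 by auto
  have part1: "JH / DH \<le> lam1" using le DHpos by (simp add: pos_divide_le_eq)
  have part2: "JH / DH < lam1" if c3: "\<forall>e\<in>E. card e > 2"
  proof (rule ccontr)
    assume "\<not> JH / DH < lam1"
    then have "lam1 \<le> JH / DH" by simp
    then have "lam1 * DH \<le> JH" using DHpos by (simp add: pos_le_divide_eq)
    then have "(\<Sum>e\<in>E. gap e) = 0" using sumgap le by simp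
    then have gz: "\<forall>e\<in>E. gap e = 0" using sum_nonneg_eq_0_iff[OF finE, of gap] gap0 by blast
    have supp: "f u * f v = 0" if e: "e \<in> E" and uv: "u \<in> e" "v \<in> e" "u \<noteq> v" for e u v
    proof -
      have k: "real (card e) - 1 > 0" using rank2 e by auto
      have "w e > 0" using wpos e by auto
      then have "w e / (2 * (real (card e) - 1)) \<noteq> 0" using k by simp
      then have "edge_T f e - 2 * (real (card e) - 1) * (hDelta f e)\<^sup>2 = 0"
        using gz e gapform[OF e] by simp
      moreover have "card e \<ge> 3" using c3 e by auto
      ultimately show ?thesis using edge_bound[OF fE[OF e], of f] rank2 e uv by auto
    qed
    have zero: "clique_adj E w v0 v * f v = 0" if v: "v \<in> V" for v
    proof (cases "clique_adj E w v0 v = 0")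
      case False
      have "v0 \<noteq> v" using False unfolding clique_adj_def by auto
      moreover have "{e\<in>E. v0 \<in> e \<and> v \<in> e} \<noteq> {}"
      proof
        assume "{e\<in>E. v0 \<in> e \<and> v \<in> e} = {}"
        then have "clique_adj E w v0 v = 0" unfolding clique_adj_def by (simp only: sum.empty if_cancel)
        then show False using False by simp
      qed
      ultimately obtain e where "e \<in> E" "v0 \<in> e" "v \<in> e" "v0 \<noteq> v" by blast
      then have "f v0 * f v = 0" by (rule supp)
      then have "f v = 0" using v0 by simp
      then show ?thesis by simp
    qed simp
    have "(\<Sum>v\<in>V. clique_adj E w v0 v * f v) = 0" using zero by (intro sum.neutral) blast
    then have "clique_J V E w f v0 = clique_deg V E w v0 * f v0"
      unfolding clique_J_def by simp
    then have "hdeg E w v0 * f v0 = lam1 * (hdeg E w v0 * f v0)"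
      using eigJ[OF v0(1)] Deq[OF v0(1)] by simp
    moreover have "hdeg E w v0 * f v0 \<noteq> 0"
    proof -
      have "hdeg E w v0 > 0" using degpos v0(1) by blast
      then show ?thesis using v0(2) by simp
    qed
    ultimately have lam: "lam1 = 1" by simp
    have "E \<noteq> {}"
    proof
      assume "E = {}"
      then have "hdeg E w v0 = 0" unfolding hdeg_def by simp
      moreover have "hdeg E w v0 > 0" using degpos v0(1) by blast
      ultimately show False by simp
    qed
    then obtain e0 where e0: "e0 \<in> E" by blast
    obtain mu g where "is_eigvec V (clique_DinvJ V E w) mu g" "mu < 1"
      using exists_small_eig[OF finV finE edges wpos rank2 Dpos e0] by blast
    then show False using smallest lam by force
  qed
  show ?thesis using part1 part2 unfolding JH_def DH_def by blast
qed

end
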